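(* Let $k\ge 4$ and $n=2k-1$. Let $\eta=(\eta_1<\eta_2<\dots<\eta_l)\in\mathbb{D}_k\setminus\{(3,k-3)\}$, and let $Y_{2\eta^*}$ be the Young diagram whose main diagonal consists of exactly the cells $c_{1,1},\dots,c_{l+1,l+1}$ and which satisfies $h_{1,1}=2n-4$, $h_{i,i}=2\eta_{l-(i-2)}$ for $2\le i\le l+1$, and $a(c_{i,i})=l(c_{i,i})+1$ for $1\le i\le l+1$. Let $\lambda$ be the partition associated with $Y_{2\eta^*}$ (i.e. $\lambda=\mathbb{N}_0\setminus \mathrm{KN}^{-1}(Y_{2\eta^*})$, equivalently the set of hook lengths of the cells of the first column of $Y_{2\eta^*}$). Then $\lambda$ is unrefinable. In particular $\lambda\in\overline{\mathcal{U}}_{T_n}$.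
   Context: A partition of $N$ into distinct parts is a sequence $\lambda=(\lambda_1,\dots,\lambda_t)$ of positive integers with $\lambda_1<\dots<\lambda_t$, $\sum\lambda_i=N$ and $t\ge 2$; it is identified with its set of parts. $\mathbb{D}_N$ denotes the set of such partitions. The missing parts of $\lambda$ are $\mathcal{M}_\lambda=\{1,\dots,\lambda_t\}\setminus\{\lambda_1,\dots,\lambda_t\}$. $\lambda$ is refinable if there are two distinct missing parts $\mu<\mu'$ with $\mu+\mu'\in\lambda$, and unrefinable otherwise; $\mathcal{U}_N$ is the set of unrefinable partitions of $N$. An unrefinable partition of $N$ is maximal if its largest part equals the maximum of the largest parts of all elements of $\mathcal{U}_N$; $\widetilde{\mathcal{U}}_N$ is the set of these, and $\overline{\mathcal{U}}_N=\{\lambda\in\widetilde{\mathcal{U}}_N : \#\mathcal{M}_\lambda=\lfloor\lambda_t/2\rfloor\}$. $T_n=n(n+1)/2$. Young diagrams are in English convention: rows $R_1,R_2,\dots$ from top to bottom (weakly decreasing lengths), columns $C_1,C_2,\dots$ from left to right; $c_{i,j}$ is the cell in row $i$ and column $j$. The arm $a(c_{i,j})$ is the number of cells to the right of $c_{i,j}$ in its row, the leg $l(c_{i,j})$ the number of cells below it in its column, and the hook length is $h_{i,j}=a(c_{i,j})+l(c_{i,j})+1$. The main diagonal consists of the cells $c_{i,i}$. A numerical set is a set $S\subseteq\mathbb{N}_0$ with $0\in S$ and finite complement. The Keith–Nath (KN) transformation sends $S$ to the Young diagram $\mathrm{KN}(S)$ whose boundary is the lattice path that, starting from the origin, takes for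 $j=0,1,\dots,\max(\mathbb{N}_0\setminus S)$ an east step if $j\in S$ and a north step if $j\notin S$; this is a bijection between numerical sets and Young diagrams, and the hook lengths of the first-column cells of $\mathrm{KN}(S)$ are exactly the elements of $\mathbb{N}_0\setminus S$. *)

theory Defs
  imports Main
begin

(* Partitions into distinct parts are represented by their (finite) set of parts. *)
definition distinct_partitions :: "nat \<Rightarrow> nat set set" where
  "distinct_partitions N = {lam. finite lam \<and> 0 \<notin> lam \<and> card lam \<ge> 2 \<and> \<Sum>lam = N}"

definition missing_parts :: "nat set \<Rightarrow> nat set" where
  "missing_parts lam = {1..Max lam} - lam"

definition refinable :: "nat set \<Rightarrow> bool" where
  "refinable lam \<longleftrightarrow> (\<exists>\<mu>\<in>missing_parts lam. \<exists>\<mu>'\<in>missing_parts lam. \<mu> < \<mu>' \<and> \<mu> + \<mu>' \<in> lam)"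

definition unrefinable_partitions :: "nat \<Rightarrow> nat set set" where
  "unrefinable_partitions N = {lam \<in> distinct_partitions N. \<not> refinable lam}"

definition maximal_unrefinable :: "nat \<Rightarrow> nat set set" where
  "maximal_unrefinable N = {lam \<in> unrefinable_partitions N.
      Max lam = Max (Max ` unrefinable_partitions N)}"

definition maximal_unrefinable_bar :: "nat \<Rightarrow> nat set set" where
  "maximal_unrefinable_bar N = {lam \<in> maximal_unrefinable N.
      card (missing_parts lam) = Max lam div 2}"

definition tri :: "nat \<Rightarrow> nat" where
  "tri n = n * (n + 1) div 2"

(* Young diagrams (English convention), as finite sets of cells (i,j), i = row, j = column,
   1-indexed, closed under moving up and to the left. *)
definition young_diagram :: "(nat \<times> nat) set \<Rightarrow> bool" where
  "young_diagram Y \<longleftrightarrow> finite Y \<and> (\<forall>(i,j)\<in>Y. 1 \<le> i \<and> 1 \<le> j) \<and>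
     (\<forall>i j i' j'. (i,j) \<in> Y \<and> 1 \<le> i' \<and> i' \<le> i \<and> 1 \<le> j' \<and> j' \<le> j \<longrightarrow> (i',j') \<in> Y)"

definition arm :: "(nat \<times> nat) set \<Rightarrow> nat \<Rightarrow> nat \<Rightarrow> nat" where
  "arm Y i j = card {j'. j < j' \<and> (i,j') \<in> Y}"

definition leg :: "(nat \<times> nat) set \<Rightarrow> nat \<Rightarrow> nat \<Rightarrow> nat" where
  "leg Y i j = card {i'. i < i' \<and> (i',j) \<in> Y}"

definition hook :: "(nat \<times> nat) set \<Rightarrow> nat \<Rightarrow> nat \<Rightarrow> nat" where
  "hook Y i j = arm Y i j + leg Y i j + 1"

(* The partition associated with Y: the hook lengths of the first-column cells
   (= complement of the numerical set KN^{-1}(Y)). *)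
definition first_column_hooks :: "(nat \<times> nat) set \<Rightarrow> nat set" where
  "first_column_hooks Y = {hook Y i 1 | i. (i,1) \<in> Y}"

end

theory Submission
  imports Defs
begin


lemma two_sum_Icc: "2 * \<Sum>{1..s::nat} = s * (s + 1)"
  by (induction s) (auto simp: algebra_simps)

lemma two_tri: "2 * tri n = n * (n + 1)"
  unfolding tri_def by simp

lemma bound_C:
  assumes lamU: "lam \<in> unrefinable_partitions (tri n)" and n7: "n \<ge> 7"
  shows "Max lam \<le> 2 * n - 4"
proof (rule ccontr)
  assume big: "\<not> Max lam \<le> 2 * n - 4"
  from lamU have fin: "finite lam" and z: "0 \<notin> lam" and c2: "card lam \<ge> 2"
    and sm: "\<Sum>lam = tri n" and nr: "\<not> refinable lam"
    by (auto simp: unrefinable_partitions_def distinct_partitions_def)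
  have ne: "lam \<noteq> {}" using c2 by auto
  define m where "m = Max lam"
  have mlam: "m \<in> lam" using fin ne m_def by simp
  have le_m: "\<And>x. x \<in> lam \<Longrightarrow> x \<le> m" using fin m_def by simp
  have pos: "\<And>x. x \<in> lam \<Longrightarrow> 1 \<le> x" using z by (metis less_one not_le)
  have pair: "\<And>\<mu>. 1 \<le> \<mu> \<Longrightarrow> 2 * \<mu> < m \<Longrightarrow> \<mu> \<in> lam \<or> m - \<mu> \<in> lam"
  proof (rule ccontr)
    fix \<mu> assume a: "1 \<le> \<mu>" "2 * \<mu> < m" "\<not> (\<mu> \<in> lam \<or> m - \<mu> \<in> lam)"
    have "\<mu> \<in> missing_parts lam" "m - \<mu> \<in> missing_parts lam"
      using a by (auto simp: missing_parts_def m_def[symmetric])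
    moreover have "\<mu> < m - \<mu>" "\<mu> + (m - \<mu>) \<in> lam" using a mlam by auto
    ultimately have "refinable lam" unfolding refinable_def by blast
    with nr show False by simp
  qed
  define s where "s = (m - 1) div 2"
  define A where "A = {1..s}"
  have A_iff: "\<And>\<mu>. \<mu> \<in> A \<longleftrightarrow> 1 \<le> \<mu> \<and> 2 * \<mu> < m"
    using big unfolding A_def s_def m_def[symmetric] by auto
  define E2 where "E2 = lam \<inter> {x. 2 * x = m}"
  define B where "B = lam \<inter> {x. m < 2 * x \<and> x < m}"
  define g where "g = (\<lambda>\<mu>. (if \<mu> \<in> lam then \<mu> else 0) + (if m - \<mu> \<in> lam then m - \<mu> else 0))"
  have decomp: "lam = insert m (E2 \<union> (lam \<inter> A) \<union> B)"
  proof -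
    have "\<And>x. x \<in> lam \<Longrightarrow> x \<noteq> m \<Longrightarrow> x < m" using le_m by (simp add: le_neq_implies_less)
    then show ?thesis using mlam pos unfolding E2_def B_def by (auto simp: A_iff)
  qed
  have finA: "finite A" unfolding A_def by simp
  have "B = (\<lambda>\<mu>. m - \<mu>) ` {\<mu> \<in> A. m - \<mu> \<in> lam}"
  proof
    show "B \<subseteq> (\<lambda>\<mu>. m - \<mu>) ` {\<mu> \<in> A. m - \<mu> \<in> lam}"
    proof
      fix x assume x: "x \<in> B"
      hence "m - x \<in> {\<mu> \<in> A. m - \<mu> \<in> lam}" "x = m - (m - x)"
        unfolding B_def by (auto simp: A_iff)
      thus "x \<in> (\<lambda>\<mu>. m - \<mu>) ` {\<mu> \<in> A. m - \<mu> \<in> lam}" by blast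
    qed
    show "(\<lambda>\<mu>. m - \<mu>) ` {\<mu> \<in> A. m - \<mu> \<in> lam} \<subseteq> B"
      unfolding B_def by (auto simp: A_iff)
  qed
  moreover have "inj_on (\<lambda>\<mu>. m - \<mu>) {\<mu> \<in> A. m - \<mu> \<in> lam}"
    by (rule inj_onI) (auto simp: A_iff)
  ultimately have sB: "\<Sum>B = (\<Sum>\<mu>\<in>{\<mu> \<in> A. m - \<mu> \<in> lam}. m - \<mu>)"
    by (simp add: sum.reindex)
  also have "\<dots> = (\<Sum>\<mu>\<in>A. if m - \<mu> \<in> lam then m - \<mu> else 0)"
    using finA by (simp add: sum.inter_filter)
  finally have sB2: "\<Sum>B = (\<Sum>\<mu>\<in>A. if m - \<mu> \<in> lam then m - \<mu> else 0)" .
  have sA: "\<Sum>(lam \<inter> A) = (\<Sum>\<mu>\<in>A. if \<mu> \<in> lam then \<mu> else 0)"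
    using sum.inter_restrict[OF finA, of "\<lambda>x. x" lam] by (simp add: Int_commute)
  have sg: "\<Sum>(lam \<inter> A) + \<Sum>B = sum g A"
    unfolding sA sB2 g_def by (rule sum.distrib[symmetric])
  have "\<Sum>lam = m + \<Sum>(E2 \<union> (lam \<inter> A) \<union> B)"
    apply (subst decomp) apply (subst sum.insert)
    using fin pos[OF mlam] unfolding E2_def B_def by (auto simp: A_iff)
  also have "\<Sum>(E2 \<union> (lam \<inter> A) \<union> B) = \<Sum>E2 + \<Sum>(lam \<inter> A) + \<Sum>B"
    apply (subst sum.union_disjoint) defer defer defer
    apply (subst sum.union_disjoint)
    using fin unfolding E2_def B_def by (auto simp: A_iff)
  finally have sl: "\<Sum>lam = m + \<Sum>E2 + sum g A" using sg by simp
  have E2c: "E2 = {} \<or> (\<exists>x. E2 = {x} \<and> 2 * x = m)"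
    unfolding E2_def by auto
  have gge: "\<And>\<mu>. \<mu> \<in> A \<Longrightarrow> \<mu> \<le> g \<mu>"
    using pair A_iff unfolding g_def by fastforce
  define d where "d = (\<lambda>\<mu>. g \<mu> - \<mu>)"
  have "sum g A = sum (\<lambda>\<mu>. \<mu> + d \<mu>) A"
    using gge unfolding d_def by (intro sum.cong) auto
  hence sgd: "sum g A = \<Sum>A + sum d A" by (simp add: sum.distrib)
  have tA: "2 * \<Sum>A = s * (s + 1)" unfolding A_def by (rule two_sum_Icc)
  have dcases: "\<And>\<mu>. \<mu> \<in> A \<Longrightarrow> d \<mu> = 0 \<or> d \<mu> = m - 2 * \<mu> \<or> d \<mu> = m - \<mu>"
    using pair A_iff unfolding d_def g_def by fastforce
  have key: "2 * m + 2 * \<Sum>E2 + s * (s + 1) + 2 * sum d A = n * (n + 1)"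
  proof -
    have "2 * \<Sum>lam = 2 * m + 2 * \<Sum>E2 + 2 * \<Sum>A + 2 * sum d A" using sl sgd by simp
    thus ?thesis using tA sm two_tri[of n] by linarith
  qed
  consider "m \<ge> 2 * n - 1" | "m = 2 * n - 3" | "m = 2 * n - 2"
    using big m_def by linarith
  then show False
  proof cases
    case 1
    have "s \<ge> n - 1" using 1 n7 unfolding s_def by linarith
    hence "s * (s + 1) \<ge> (n - 1) * n" using mult_mono n7 by (metis add_le_mono1 le_add1 le_add_diff_inverse2 le_trans less_one not_le zero_le)
    moreover have "(n - 1) * n = n * n - n" "n * (n + 1) = n * n + n"
      by (simp_all add: algebra_simps diff_mult_distrib)
    moreover have "n \<le> n * n" by simp
    ultimately show False using key 1 n7 by linarith
  next
    case 2
    have ss: "s = n - 2" using 2 n7 unfolding s_def by linarith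
    have "\<not> (\<exists>x. 2 * x = m)" using 2 n7 by presburger
    hence "E2 = {}" using E2c by auto
    hence k2: "2 * m + s * (s + 1) + 2 * sum d A = n * (n + 1)" using key by simp
    have nn: "n = s + 2" using ss n7 by simp
    have e1: "s * (s + 1) = s * s + s" "n * (n + 1) = s * s + 5 * s + 6"
      using nn by (simp_all add: algebra_simps)
    have D: "sum d A = 2" using k2 e1 2 nn by linarith
    have dc: "\<And>\<mu>. \<mu> \<in> A \<Longrightarrow> d \<mu> = 0 \<or> (d \<mu> = 1 \<and> \<mu> = s) \<or> d \<mu> \<ge> 3"
    proof -
      fix \<mu> assume mu: "\<mu> \<in> A"
      hence "\<mu> \<le> s" "1 \<le> \<mu>" unfolding A_def by auto
      hence "\<mu> = s \<or> \<mu> + 1 \<le> s" by linarith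
      thus "d \<mu> = 0 \<or> (d \<mu> = 1 \<and> \<mu> = s) \<or> d \<mu> \<ge> 3"
        using dcases[OF mu] 2 ss n7 \<open>\<mu> \<le> s\<close> by (elim disjE) linarith+
    qed
    show False
    proof (cases "\<exists>\<mu>\<in>A. d \<mu> \<ge> 3")
      case True
      then obtain \<mu> where "\<mu> \<in> A" "d \<mu> \<ge> 3" by blast
      hence "d \<mu> \<le> sum d A" using finA by (intro member_le_sum) auto
      then show False using D \<open>d \<mu> \<ge> 3\<close> by simp
    next
      case False
      have sA': "s \<in> A" unfolding A_def using ss n7 by simp
      have "sum d A = d s + sum d (A - {s})" using finA sA' by (simp add: sum.remove)
      moreover have "\<forall>\<mu>\<in>A - {s}. d \<mu> = 0"
      proof
        fix \<mu> assume "\<mu> \<in> A - {s}"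
        thus "d \<mu> = 0" using dc[of \<mu>] False by auto
      qed
      hence "sum d (A - {s}) = 0" by simp
      moreover have "d s \<le> 1" using dc[OF sA'] False sA' by auto
      ultimately show False using D by simp
    qed
  next
    case 3
    have ss: "s = n - 2" using 3 n7 unfolding s_def by linarith
    have "\<Sum>E2 = 0 \<or> \<Sum>E2 = n - 1" using E2c 3 n7 by auto
    moreover have nn: "n = s + 2" using ss n7 by simp
    moreover have e1: "s * (s + 1) = s * s + s" "n * (n + 1) = s * s + 5 * s + 6"
      using nn by (simp_all add: algebra_simps)
    ultimately have D: "sum d A = 1 \<and> \<Sum>E2 = 0" using 3 key n7 by (elim disjE) linarith+
    have dc: "\<And>\<mu>. \<mu> \<in> A \<Longrightarrow> d \<mu> = 0 \<or> d \<mu> \<ge> 2"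
    proof -
      fix \<mu> assume mu: "\<mu> \<in> A"
      hence "\<mu> \<le> s" "1 \<le> \<mu>" unfolding A_def by auto
      thus "d \<mu> = 0 \<or> d \<mu> \<ge> 2"
        using dcases[OF mu] 3 ss n7 by (elim disjE) linarith+
    qed
    show False
    proof (cases "\<exists>\<mu>\<in>A. d \<mu> \<ge> 2")
      case True
      then obtain \<mu> where "\<mu> \<in> A" "d \<mu> \<ge> 2" by blast
      hence "d \<mu> \<le> sum d A" using finA by (intro member_le_sum) auto
      then show False using D \<open>d \<mu> \<ge> 2\<close> by simp
    next
      case False
      hence "sum d A = 0" using dc finA by auto
      then show False using D by simp
    qed
  qed
qed




definition lam0 :: "nat \<Rightarrow> nat set \<Rightarrow> nat set" where
  "lam0 c E = insert (2 * c) (((+) c) ` E \<union> ({1..<c} - (\<lambda>e. c - e) ` E))"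

lemma dp_basic:
  assumes "E \<in> distinct_partitions k"
  shows "finite E" "0 \<notin> E" "2 \<le> card E" "\<Sum>E = k"
  using assms by (auto simp: distinct_partitions_def)

lemma dp_pos: "E \<in> distinct_partitions k \<Longrightarrow> e \<in> E \<Longrightarrow> 1 \<le> e"
  using dp_basic(2) by (metis less_one not_le)

lemma dp_sub:
  assumes "E \<in> distinct_partitions k" "F \<subseteq> E"
  shows "\<Sum>F \<le> k"
  using dp_basic[OF assms(1)] assms(2) by (metis sum_mono2 zero_le)

lemma dp_two:
  assumes "E \<in> distinct_partitions k" "e \<in> E" "e' \<in> E" "e \<noteq> e'"
  shows "e + e' \<le> k"
  using dp_sub[OF assms(1), of "{e, e'}"] assms by simp

lemma dp_three:
  assumes "E \<in> distinct_partitions k" "e \<in> E" "e' \<in> E" "e'' \<in> E"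
    "e \<noteq> e'" "e \<noteq> e''" "e' \<noteq> e''"
  shows "e + e' + e'' \<le> k"
  using dp_sub[OF assms(1), of "{e, e', e''}"] assms by simp

lemma dp_other:
  assumes "E \<in> distinct_partitions k" "e \<in> E"
  obtains x where "x \<in> E" "x \<noteq> e"
proof -
  have "card (E - {e}) \<ge> 1" using dp_basic[OF assms(1)] assms(2) by simp
  hence "E - {e} \<noteq> {}" by (metis card.empty not_one_le_zero)
  thus ?thesis using that by blast
qed

lemma dp_le1:
  assumes "E \<in> distinct_partitions k" "e \<in> E"
  shows "e + 1 \<le> k"
proof -
  obtain x where "x \<in> E" "x \<noteq> e" using dp_other[OF assms] .
  thus ?thesis using dp_two[OF assms(1) assms(2) \<open>x \<in> E\<close>] dp_pos[OF assms(1) \<open>x \<in> E\<close>] by auto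
qed

lemma dp_F5:
  assumes "E \<in> distinct_partitions k" "k - 1 \<in> E" "k \<ge> 2"
  shows "1 \<in> E"
proof -
  obtain x where "x \<in> E" "x \<noteq> k - 1" using dp_other[OF assms(1,2)] .
  moreover have "x + (k - 1) \<le> k" using dp_two[OF assms(1) \<open>x \<in> E\<close> assms(2)] calculation by simp
  moreover have "1 \<le> x" using dp_pos[OF assms(1) \<open>x \<in> E\<close>] .
  ultimately have "x = 1" using assms(3) by linarith
  thus ?thesis using \<open>x \<in> E\<close> by simp
qed

lemma dp_F4:
  assumes dp: "E \<in> distinct_partitions k" and k4: "k \<ge> 4"
    and ee: "e \<in> E" "e' \<in> E" "e \<noteq> e'" and eq: "2 * e + e' = 2 * k - 3"
  shows "E = {3, k - 3}"
proof -
  note b = dp_basic[OF dp]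
  define R where "R = \<Sum>(E - {e, e'})"
  have "\<Sum>E = \<Sum>(E - {e, e'}) + \<Sum>{e, e'}"
    using b(1) ee by (intro sum.subset_diff) auto
  hence sE: "e + e' + R = k" using b(4) ee unfolding R_def by simp
  hence eR: "e' + 2 * R = 3" using eq k4 by linarith
  show ?thesis
  proof (cases "R = 0")
    case True
    have "\<forall>x\<in>E - {e, e'}. x = 0" using True b(1) unfolding R_def by simp
    hence "E - {e, e'} = {}" using b(2) by (metis Diff_iff equals0I)
    hence "E = {e, e'}" using ee by auto
    moreover have "e' = 3" "e = k - 3" using eR True sE by auto
    ultimately show ?thesis by auto
  next
    case False
    then obtain x where x: "x \<in> E - {e, e'}" unfolding R_def by (metis empty_iff sum.empty subsetI subset_antisym)
    have "x \<le> R" unfolding R_def using x b(1) by (intro member_le_sum) auto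
    moreover have "1 \<le> x" using x dp_pos[OF dp] by auto
    moreover have "1 \<le> e'" using ee dp_pos[OF dp] by auto
    ultimately have "x = 1" "e' = 1" using eR by linarith+
    thus ?thesis using x by auto
  qed
qed

lemma lam0_mem:
  assumes "\<forall>e\<in>E. 1 \<le> e \<and> e < c"
  shows "x \<in> lam0 c E \<longleftrightarrow> x = 2 * c \<or> (c < x \<and> x - c \<in> E) \<or> (1 \<le> x \<and> x < c \<and> c - x \<notin> E)"
proof
  assume "x \<in> lam0 c E"
  then consider "x = 2 * c" | e where "e \<in> E" "x = c + e" | "x \<in> {1..<c}" "x \<notin> (\<lambda>e. c - e) ` E"
    unfolding lam0_def by auto
  then show "x = 2 * c \<or> (c < x \<and> x - c \<in> E) \<or> (1 \<le> x \<and> x < c \<and> c - x \<notin> E)"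
  proof cases
    case 2 thus ?thesis using assms by auto
  next
    case 3
    have "c - x \<notin> E"
    proof
      assume "c - x \<in> E"
      moreover have "x = c - (c - x)" using 3 by auto
      ultimately show False using 3 by blast
    qed
    thus ?thesis using 3 by auto
  qed simp
next
  assume a: "x = 2 * c \<or> (c < x \<and> x - c \<in> E) \<or> (1 \<le> x \<and> x < c \<and> c - x \<notin> E)"
  show "x \<in> lam0 c E"
  proof -
    { assume "c < x" "x - c \<in> E"
      hence "x \<in> (+) c ` E" by (metis image_eqI le_add_diff_inverse less_imp_le) }
    moreover
    { assume b: "1 \<le> x" "x < c" "c - x \<notin> E"
      have "x \<notin> (\<lambda>e. c - e) ` E"
      proof
        assume "x \<in> (\<lambda>e. c - e) ` E"
        then obtain e where "e \<in> E" "x = c - e" by auto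
        moreover hence "c - x = e" using assms by auto
        ultimately show False using b by simp
      qed
      hence "x \<in> {1..<c} - (\<lambda>e. c - e) ` E" using b by auto }
    ultimately show ?thesis using a unfolding lam0_def by blast
  qed
qed

lemma lam0_props:
  assumes dp: "E \<in> distinct_partitions k" and k4: "k \<ge> 4" and ne: "E \<noteq> {3, k - 3}"
    and cdef: "c = 2 * k - 3"
  shows "\<not> refinable (lam0 c E)" "lam0 c E \<in> distinct_partitions (tri (2 * k - 1))"
    "Max (lam0 c E) = 2 * c" "card (missing_parts (lam0 c E)) = c"
proof -
  note b = dp_basic[OF dp]
  have Ebd: "\<forall>e\<in>E. 1 \<le> e \<and> e < c" using dp_pos[OF dp] dp_le1[OF dp] cdef k4 by fastforce
  have ek: "\<And>e. e \<in> E \<Longrightarrow> e + 1 \<le> k" using dp_le1[OF dp] .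
  note mem = lam0_mem[OF Ebd]
  define L where "L = lam0 c E"
  have finL: "finite L" unfolding L_def lam0_def using b(1) by auto
  have Lsub: "L \<subseteq> {1..2 * c}"
  proof
    fix x assume "x \<in> L"
    hence "x = 2 * c \<or> (c < x \<and> x - c \<in> E) \<or> (1 \<le> x \<and> x < c \<and> c - x \<notin> E)"
      unfolding L_def using mem by blast
    thus "x \<in> {1..2 * c}" using Ebd k4 cdef by auto
  qed
  have cL: "2 * c \<in> L" unfolding L_def lam0_def by simp
  have MaxL: "Max L = 2 * c"
    using Lsub cL finL by (intro Max_eqI) auto
  thus "Max (lam0 c E) = 2 * c" unfolding L_def .
  define P1 where "P1 = (+) c ` E"
  define Q where "Q = (\<lambda>e. c - e) ` E"
  define P2 where "P2 = {1..<c} - Q"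
  have Ldec: "L = insert (2 * c) (P1 \<union> P2)" unfolding L_def lam0_def P1_def P2_def Q_def by simp
  have inj1: "inj_on ((+) c) E" by (auto simp: inj_on_def)
  have inj2: "inj_on (\<lambda>e. c - e) E" using Ebd by (auto simp: inj_on_def)
  have Qsub: "Q \<subseteq> {1..<c}" unfolding Q_def using Ebd by auto
  have cQ: "card Q = card E" unfolding Q_def using card_image[OF inj2] .
  have cP1: "card P1 = card E" unfolding P1_def using card_image[OF inj1] .
  have cE: "card E \<le> c - 1" using card_mono[OF _ Qsub] cQ by simp
  have cP2: "card P2 = c - 1 - card E" unfolding P2_def using card_Diff_subset[OF _ Qsub] cQ
    by (metis card_atLeastLessThan finite_subset finite_atLeastLessThan Qsub)
  have d1: "2 * c \<notin> P1 \<union> P2" unfolding P1_def P2_def using Ebd by auto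
  have d2: "P1 \<inter> P2 = {}" unfolding P1_def P2_def by auto
  have fP1: "finite P1" "finite P2" unfolding P1_def P2_def using b(1) by auto
  have cardL: "card L = c"
    using Ldec d1 d2 fP1 cP1 cP2 cE card_Un_disjoint[OF fP1 d2] Ebd k4 cdef by simp
  have "card (missing_parts L) = card {1..2 * c} - card L"
    unfolding missing_parts_def MaxL using card_Diff_subset[OF finL Lsub] by simp
  thus "card (missing_parts (lam0 c E)) = c" using cardL unfolding L_def by simp
  have sP1: "\<Sum>P1 = card E * c + k" unfolding P1_def using b(4)
    by (simp add: sum.reindex[OF inj1] sum.distrib)
  have sQ: "\<Sum>Q + k = card E * c"
  proof -
    have "\<Sum>Q = (\<Sum>e\<in>E. c - e)" unfolding Q_def by (simp add: sum.reindex[OF inj2])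
    hence "\<Sum>Q + \<Sum>E = (\<Sum>e\<in>E. c - e + e)" by (simp add: sum.distrib)
    also have "\<dots> = (\<Sum>e\<in>E. c)" using Ebd by (intro sum.cong) auto
    finally show ?thesis using b(4) by simp
  qed
  have sP2: "\<Sum>P2 + \<Sum>Q = \<Sum>{1..<c}"
    unfolding P2_def using sum_diff_nat[OF _ Qsub, of "\<lambda>x. x"] sum_mono2[OF _ Qsub, of "\<lambda>x. x"]
      finite_subset[OF Qsub] by simp
  have gs: "2 * \<Sum>{1..<c} = (c - 1) * c"
  proof -
    have c2: "c \<ge> 2" using k4 cdef by simp
    have "{1..<c} = {1..c - 1}" using c2 by auto
    moreover have "c - 1 + 1 = c" using c2 by simp
    ultimately show ?thesis using two_sum_Icc[of "c - 1"] by metis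
  qed
  have sL: "\<Sum>L = 2 * c + \<Sum>P1 + \<Sum>P2"
    using Ldec d1 d2 fP1 by (simp add: sum.union_disjoint)
  have "2 * \<Sum>L = (2 * k - 1) * (2 * k - 1 + 1)"
  proof -
    obtain j where j: "k = j + 4" using k4 by (metis add.commute le_Suc_ex)
    have cj: "c = 2 * j + 5" using cdef j by simp
    have "2 * \<Sum>L = 4 * c + 2 * k + (c - 1) * c + 2 * k"
      using sL sP1 sP2 sQ gs by linarith
    thus ?thesis unfolding cj j by (simp add: algebra_simps)
  qed
  hence sumL: "\<Sum>L = tri (2 * k - 1)" using two_tri[of "2 * k - 1"] by simp
  have "0 \<notin> L" "2 \<le> card L" using Lsub cardL k4 cdef by auto
  thus "lam0 c E \<in> distinct_partitions (tri (2 * k - 1))"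
    using finL sumL unfolding distinct_partitions_def L_def by simp
  show "\<not> refinable (lam0 c E)"
  proof
    assume "refinable (lam0 c E)"
    then obtain \<mu> \<mu>' where mm: "\<mu> \<in> missing_parts L" "\<mu>' \<in> missing_parts L" "\<mu> < \<mu>'"
      "\<mu> + \<mu>' \<in> L" unfolding refinable_def L_def by blast
    have mis: "\<And>x. x \<in> missing_parts L \<Longrightarrow> 1 \<le> x \<and> x \<le> 2 * c \<and> x \<noteq> 2 * c \<and>
        \<not> (c < x \<and> x - c \<in> E) \<and> \<not> (x < c \<and> c - x \<notin> E)"
    proof -
      fix x assume "x \<in> missing_parts L"
      hence "x \<in> {1..2 * c}" "x \<notin> L" unfolding missing_parts_def MaxL by auto
      hence "x \<in> {1..2 * c}" "x \<notin> lam0 c E" unfolding L_def by auto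
      thus "1 \<le> x \<and> x \<le> 2 * c \<and> x \<noteq> 2 * c \<and>
        \<not> (c < x \<and> x - c \<in> E) \<and> \<not> (x < c \<and> c - x \<notin> E)"
        unfolding mem[of x] by auto
    qed
    note m1 = mis[OF mm(1)] and m2 = mis[OF mm(2)]
    have sig: "\<mu> + \<mu>' = 2 * c \<or> (c < \<mu> + \<mu>' \<and> \<mu> + \<mu>' - c \<in> E) \<or> (1 \<le> \<mu> + \<mu>' \<and> \<mu> + \<mu>' < c \<and> c - (\<mu> + \<mu>') \<notin> E)"
      using mm(4) mem[of "\<mu> + \<mu>'"] unfolding L_def by blast
    have sle: "\<mu> + \<mu>' \<le> 2 * c" using mm(4) Lsub by auto
    have mlt: "\<mu> < c" using sle mm(3) by linarith
    define e where "e = c - \<mu>"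
    have eE: "e \<in> E" using m1 mlt unfolding e_def by auto
    have e1: "e + 1 \<le> k" using ek[OF eE] .
    consider "\<mu>' < c" | "\<mu>' = c" | "c < \<mu>'" by linarith
    then show False
    proof cases
      case 1
      define e' where "e' = c - \<mu>'"
      have e'E: "e' \<in> E" using m2 1 unfolding e'_def by auto
      have nee: "e \<noteq> e'" using mm(3) 1 unfolding e_def e'_def by linarith
      have "e + e' \<le> k" using dp_two[OF dp eE e'E nee] .
      hence gt: "c < \<mu> + \<mu>'" "\<mu> + \<mu>' < 2 * c" using 1 mlt k4 cdef unfolding e_def e'_def by linarith+
      hence e''E: "\<mu> + \<mu>' - c \<in> E" using sig by auto
      define e'' where "e'' = \<mu> + \<mu>' - c"
      have tot: "e + e' + e'' = 2 * k - 3" using gt 1 mlt cdef unfolding e_def e'_def e''_def by linarith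
      have e''E': "e'' \<in> E" using e''E unfolding e''_def .
      show False
      proof (cases "e'' = e \<or> e'' = e'")
        case True
        then show False
        proof
          assume "e'' = e"
          hence "2 * e + e' = 2 * k - 3" using tot by simp
          thus False using dp_F4[OF dp k4 eE e'E nee] ne by simp
        next
          assume "e'' = e'"
          hence "2 * e' + e = 2 * k - 3" using tot by simp
          thus False using dp_F4[OF dp k4 e'E eE] nee ne by simp
        qed
      next
        case False
        hence "e + e' + e'' \<le> k" using dp_three[OF dp eE e'E e''E' nee] by auto
        thus False using tot k4 by linarith
      qed
    next
      case 2
      have gt: "c < \<mu> + \<mu>'" "\<mu> + \<mu>' < 2 * c" using 2 mlt m1 unfolding e_def by linarith+
      hence e''E: "\<mu> + \<mu>' - c \<in> E" using sig by auto
      have tot: "e + (\<mu> + \<mu>' - c) = 2 * k - 3" using 2 mlt cdef unfolding e_def by linarith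
      show False
      proof (cases "\<mu> + \<mu>' - c = e")
        case True
        thus False using tot k4 by presburger
      next
        case False
        thus False using dp_two[OF dp eE e''E] tot k4 by linarith
      qed
    next
      case 3
      define f where "f = \<mu>' - c"
      have fE: "f \<notin> E" "1 \<le> f" using m2 3 unfolding f_def by auto
      have sne: "\<mu> + \<mu>' \<noteq> 2 * c"
      proof
        assume "\<mu> + \<mu>' = 2 * c"
        hence "f = e" using mlt 3 unfolding f_def e_def by linarith
        thus False using fE eE by simp
      qed
      have gt: "c < \<mu> + \<mu>'" using 3 by linarith
      hence e''E: "\<mu> + \<mu>' - c \<in> E" using sig sne by auto
      have tot: "\<mu> + \<mu>' - c + e = c + f" using 3 mlt sle unfolding e_def f_def by linarith
      show False
      proof (cases "\<mu> + \<mu>' - c = e")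
        case True
        hence "2 * e = c + f" using tot by simp
        hence "f = 1" "e = k - 1" using e1 fE cdef k4 by linarith+
        thus False using dp_F5[OF dp] eE fE k4 by auto
      next
        case False
        thus False using dp_two[OF dp e''E eE] tot k4 cdef fE by linarith
      qed
    qed
  qed
qed





lemma yd_row:
  assumes Y: "young_diagram Y" and i: "1 \<le> i"
  shows "{j. (i,j) \<in> Y} = {1..card {j. (i,j) \<in> Y}}"
proof -
  define S where "S = {j. (i,j) \<in> Y}"
  have fY: "finite Y" and pos: "\<And>a b. (a,b) \<in> Y \<Longrightarrow> 1 \<le> a \<and> 1 \<le> b"
    and cl: "\<And>a b a' b'. (a,b) \<in> Y \<Longrightarrow> 1 \<le> a' \<Longrightarrow> a' \<le> a \<Longrightarrow> 1 \<le> b' \<Longrightarrow> b' \<le> b \<Longrightarrow> (a',b') \<in> Y"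
    using Y unfolding young_diagram_def by blast+
  have "S \<subseteq> snd ` Y" unfolding S_def by force
  hence fS: "finite S" using fY finite_surj by blast
  show ?thesis
  proof (cases "S = {}")
    case True thus ?thesis unfolding S_def[symmetric] by simp
  next
    case False
    define M where "M = Max S"
    have MS: "M \<in> S" using fS False M_def by simp
    have "S = {1..M}"
    proof
      show "S \<subseteq> {1..M}" using pos fS M_def unfolding S_def by auto
      show "{1..M} \<subseteq> S" using MS cl i unfolding S_def by auto
    qed
    thus ?thesis unfolding S_def[symmetric] by simp
  qed
qed

lemma yd_col:
  assumes Y: "young_diagram Y" and j: "1 \<le> j"
  shows "{i. (i,j) \<in> Y} = {1..card {i. (i,j) \<in> Y}}"
proof -
  define S where "S = {i. (i,j) \<in> Y}"
  have fY: "finite Y" and pos: "\<And>a b. (a,b) \<in> Y \<Longrightarrow> 1 \<le> a \<and> 1 \<le> b"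
    and cl: "\<And>a b a' b'. (a,b) \<in> Y \<Longrightarrow> 1 \<le> a' \<Longrightarrow> a' \<le> a \<Longrightarrow> 1 \<le> b' \<Longrightarrow> b' \<le> b \<Longrightarrow> (a',b') \<in> Y"
    using Y unfolding young_diagram_def by blast+
  have "S \<subseteq> fst ` Y" unfolding S_def by force
  hence fS: "finite S" using fY finite_surj by blast
  show ?thesis
  proof (cases "S = {}")
    case True thus ?thesis unfolding S_def[symmetric] by simp
  next
    case False
    define M where "M = Max S"
    have MS: "M \<in> S" using fS False M_def by simp
    have "S = {1..M}"
    proof
      show "S \<subseteq> {1..M}" using pos fS M_def unfolding S_def by auto
      show "{1..M} \<subseteq> S" using MS cl j unfolding S_def by auto
    qed
    thus ?thesis unfolding S_def[symmetric] by simp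
  qed
qed

lemma fch_eq:
  fixes k n :: nat and eta :: "nat set" and Y :: "(nat \<times> nat) set"
  assumes k4: "k \<ge> 4"
    and n_def: "n = 2 * k - 1"
    and eta_D: "eta \<in> distinct_partitions k"
    and Y_young: "young_diagram Y"
    and diag: "\<forall>i\<ge>1. (i,i) \<in> Y \<longleftrightarrow> i \<le> card eta + 1"
    and h11: "hook Y 1 1 = 2 * n - 4"
    and hii: "\<forall>i. 2 \<le> i \<and> i \<le> card eta + 1 \<longrightarrow>
               hook Y i i = 2 * (sorted_list_of_set eta ! (card eta - (i - 2) - 1))"
    and armleg: "\<forall>i. 1 \<le> i \<and> i \<le> card eta + 1 \<longrightarrow> arm Y i i = leg Y i i + 1"
  shows "first_column_hooks Y = lam0 (2 * k - 3) eta"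
proof -
  define l where "l = card eta"
  define d where "d = l + 1"
  define c where "c = 2 * k - 3"
  define S where "S = sorted_list_of_set eta"
  define rl where "rl = (\<lambda>i. card {j. (i,j) \<in> Y})"
  define cl where "cl = (\<lambda>j. card {i. (i,j) \<in> Y})"
  have fin: "finite eta" and epos: "\<And>e. e \<in> eta \<Longrightarrow> 1 \<le> e" and sE: "\<Sum>eta = k"
  proof -
    have "finite eta" "0 \<notin> eta" "\<Sum>eta = k" using eta_D unfolding distinct_partitions_def by auto
    thus "finite eta" "\<And>e. e \<in> eta \<Longrightarrow> 1 \<le> e" "\<Sum>eta = k" by (auto simp: Suc_le_eq) (metis gr0I)
  qed
  have lS: "length S = l" unfolding S_def l_def by simp
  have setS: "set S = eta" unfolding S_def using fin by simp
  have lk: "l \<le> k"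
  proof -
    have "l = (\<Sum>e\<in>eta. 1)" unfolding l_def by simp
    also have "\<dots> \<le> \<Sum>eta" using epos by (intro sum_mono) auto
    finally show ?thesis using sE by simp
  qed
  have dc: "d \<le> c" unfolding d_def c_def using lk k4 by linarith
  have memr: "\<And>i j. 1 \<le> i \<Longrightarrow> (i,j) \<in> Y \<longleftrightarrow> 1 \<le> j \<and> j \<le> rl i"
  proof -
    fix i j :: nat assume "1 \<le> i"
    from yd_row[OF Y_young this] have "{j. (i,j) \<in> Y} = {1..rl i}" unfolding rl_def .
    thus "(i,j) \<in> Y \<longleftrightarrow> 1 \<le> j \<and> j \<le> rl i" by (metis (no_types, lifting) atLeastAtMost_iff mem_Collect_eq)
  qed
  have memc: "\<And>i j. 1 \<le> j \<Longrightarrow> (i,j) \<in> Y \<longleftrightarrow> 1 \<le> i \<and> i \<le> cl j"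
  proof -
    fix i j :: nat assume "1 \<le> j"
    from yd_col[OF Y_young this] have "{i. (i,j) \<in> Y} = {1..cl j}" unfolding cl_def .
    thus "(i,j) \<in> Y \<longleftrightarrow> 1 \<le> i \<and> i \<le> cl j" by (metis (no_types, lifting) atLeastAtMost_iff mem_Collect_eq)
  qed
  have armE: "\<And>i j. 1 \<le> i \<Longrightarrow> arm Y i j = rl i - j"
  proof -
    fix i j :: nat assume i: "1 \<le> i"
    have "{j'. j < j' \<and> (i,j') \<in> Y} = {j<..rl i}" by (rule set_eqI) (auto simp add: memr[OF i])
    thus "arm Y i j = rl i - j" unfolding arm_def by simp
  qed
  have legE: "\<And>i j. 1 \<le> j \<Longrightarrow> leg Y i j = cl j - i"
  proof -
    fix i j :: nat assume j: "1 \<le> j"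
    have "{i'. i < i' \<and> (i',j) \<in> Y} = {i<..cl j}" by (rule set_eqI) (auto simp add: memc[OF j])
    thus "leg Y i j = cl j - i" unfolding leg_def by simp
  qed
  have dg: "\<And>i. 1 \<le> i \<Longrightarrow> i \<le> d \<Longrightarrow> i \<le> rl i \<and> i \<le> cl i \<and> rl i - i = cl i - i + 1
      \<and> hook Y i i = 2 * (cl i - i) + 2"
  proof -
    fix i :: nat assume i: "1 \<le> i" "i \<le> d"
    have "(i,i) \<in> Y" using diag i unfolding d_def l_def by auto
    hence a: "i \<le> rl i" "i \<le> cl i" using memr memc i by auto
    have b: "rl i - i = cl i - i + 1" using armleg i armE legE unfolding d_def l_def by auto
    have "hook Y i i = 2 * (cl i - i) + 2" unfolding hook_def using armE legE i b by simp
    thus "i \<le> rl i \<and> i \<le> cl i \<and> rl i - i = cl i - i + 1 \<and> hook Y i i = 2 * (cl i - i) + 2"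
      using a b by simp
  qed
  have cl1: "cl 1 = c" and rl1: "rl 1 = c + 1"
  proof -
    have "2 * (cl 1 - 1) + 2 = 2 * n - 4" using dg[of 1] h11 unfolding d_def by simp
    thus "cl 1 = c" using dg[of 1] k4 n_def unfolding c_def d_def by linarith
    thus "rl 1 = c + 1" using dg[of 1] k4 unfolding c_def d_def by linarith
  qed
  have dgi: "\<And>i. 2 \<le> i \<Longrightarrow> i \<le> d \<Longrightarrow> rl i = i + S ! (l + 1 - i) \<and> cl i + 1 = i + S ! (l + 1 - i)
      \<and> S ! (l + 1 - i) \<in> eta"
  proof -
    fix i :: nat assume i: "2 \<le> i" "i \<le> d"
    have idx: "card eta - (i - 2) - 1 = l + 1 - i" using i unfolding d_def l_def by linarith
    have h: "hook Y i i = 2 * (S ! (l + 1 - i))" using hii i idx unfolding d_def l_def S_def by auto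
    have "l + 1 - i < length S" using i lS unfolding d_def by linarith
    hence inE: "S ! (l + 1 - i) \<in> eta" using setS nth_mem by blast
    have "2 * (cl i - i) + 2 = 2 * (S ! (l + 1 - i))" using dg[of i] i h by simp
    thus "rl i = i + S ! (l + 1 - i) \<and> cl i + 1 = i + S ! (l + 1 - i) \<and> S ! (l + 1 - i) \<in> eta"
      using dg[of i] i inE by linarith
  qed
  have cY: "\<And>a b a' b'. (a,b) \<in> Y \<Longrightarrow> 1 \<le> a' \<Longrightarrow> a' \<le> a \<Longrightarrow> 1 \<le> b' \<Longrightarrow> b' \<le> b \<Longrightarrow> (a',b') \<in> Y"
    using Y_young unfolding young_diagram_def by blast
  define V where "V = (\<lambda>i. rl i + c - i)"
  have fch: "first_column_hooks Y = V ` {1..c}"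
  proof -
    have "\<And>i. (i,1) \<in> Y \<longleftrightarrow> i \<in> {1..c}" using memc[of 1] cl1 by auto
    moreover have "\<And>i. i \<in> {1..c} \<Longrightarrow> hook Y i 1 = V i"
    proof -
      fix i assume i: "i \<in> {1..c}"
      hence "(i,1) \<in> Y" using memc[of 1] cl1 by auto
      hence "1 \<le> rl i" using memr i by auto
      thus "hook Y i 1 = V i" unfolding hook_def V_def using armE legE cl1 i by auto
    qed
    ultimately show ?thesis unfolding first_column_hooks_def by (auto, metis)
  qed
  have part1: "V ` {1..d} = insert (2 * c) ((+) c ` eta)"
  proof
    show "V ` {1..d} \<subseteq> insert (2 * c) ((+) c ` eta)"
    proof
      fix x assume "x \<in> V ` {1..d}"
      then obtain i where i: "i \<in> {1..d}" "x = V i" by auto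
      show "x \<in> insert (2 * c) ((+) c ` eta)"
      proof (cases "i = 1")
        case True thus ?thesis using i rl1 unfolding V_def by simp
      next
        case False
        hence "2 \<le> i" using i by simp
        thus ?thesis using dgi[of i] i unfolding V_def by auto
      qed
    qed
    show "insert (2 * c) ((+) c ` eta) \<subseteq> V ` {1..d}"
    proof
      fix x assume x: "x \<in> insert (2 * c) ((+) c ` eta)"
      show "x \<in> V ` {1..d}"
      proof (cases "x = 2 * c")
        case True
        have "V 1 = 2 * c" unfolding V_def using rl1 by simp
        moreover have "1 \<in> {1..d}" unfolding d_def by simp
        ultimately show ?thesis using True by (metis image_eqI)
      next
        case False
        then obtain e where e: "e \<in> eta" "x = c + e" using x by auto
        then obtain t where t: "t < l" "S ! t = e" using setS lS by (metis in_set_conv_nth)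
        define i where "i = l + 1 - t"
        have i: "2 \<le> i" "i \<le> d" "l + 1 - i = t" using t unfolding i_def d_def by auto
        have "V i = c + e" using dgi[OF i(1,2)] i(3) t unfolding V_def by simp
        thus ?thesis using e i by (metis atLeastAtMost_iff image_eqI le_trans one_le_numeral)
      qed
    qed
  qed
  have rlmono: "\<And>i i'. 1 \<le> i \<Longrightarrow> i \<le> i' \<Longrightarrow> rl i' \<le> rl i"
  proof -
    fix i i' :: nat assume a: "1 \<le> i" "i \<le> i'"
    show "rl i' \<le> rl i"
    proof (cases "rl i' = 0")
      case False
      hence "(i', rl i') \<in> Y" using memr a by simp
      hence "(i, rl i') \<in> Y" by (rule cY) (use a False in auto)
      thus ?thesis using memr a by simp
    qed simp
  qed
  have part2: "V ` {d<..c} = {1..<c} - (\<lambda>e. c - e) ` eta"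
  proof (rule card_subset_eq)
    show "finite ({1..<c} - (\<lambda>e. c - e) ` eta)" by simp
    show "V ` {d<..c} \<subseteq> {1..<c} - (\<lambda>e. c - e) ` eta"
    proof
      fix x assume "x \<in> V ` {d<..c}"
      then obtain i where i: "d < i" "i \<le> c" "x = V i" by auto
      have r1: "1 \<le> rl i" using memc[of 1 i] memr[of i 1] cl1 i by auto
      have rd: "rl i \<le> d"
      proof (rule ccontr)
        assume "\<not> rl i \<le> d"
        hence "(i, d + 1) \<in> Y" using memr[of i "d+1"] i by simp
        hence "(d + 1, d + 1) \<in> Y" by (rule cY) (use i in auto)
        thus False using diag unfolding d_def l_def by auto
      qed
      have rng: "1 \<le> x" "x < c" using i r1 rd unfolding V_def by auto
      have "x \<notin> (\<lambda>e. c - e) ` eta"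
      proof
        assume "x \<in> (\<lambda>e. c - e) ` eta"
        then obtain e where e: "e \<in> eta" "x = c - e" by auto
        then obtain t where t: "t < l" "S ! t = e" using setS lS by (metis in_set_conv_nth)
        define j where "j = l + 1 - t"
        have j: "2 \<le> j" "j \<le> d" "l + 1 - j = t" using t unfolding j_def d_def by auto
        have clj: "cl j + 1 = j + e" using dgi[OF j(1,2)] j(3) t by simp
        have eq: "rl i + e = i" using e i rng unfolding V_def by linarith
        show False
        proof (cases "i \<le> cl j")
          case True
          hence "(i,j) \<in> Y" using memc[of j i] j i d_def by simp
          hence "j \<le> rl i" using memr[of i j] i d_def by simp
          thus False using eq clj True by linarith
        next
          case False
          hence "(i,j) \<notin> Y" using memc[of j i] j by simp
          hence "rl i < j" using memr[of i j] i j d_def by simp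
          thus False using eq clj False by linarith
        qed
      qed
      thus "x \<in> {1..<c} - (\<lambda>e. c - e) ` eta" using rng by simp
    qed
    have inj: "inj_on V {d<..c}"
    proof (rule inj_onI)
      fix i i' assume a: "i \<in> {d<..c}" "i' \<in> {d<..c}" "V i = V i'"
      show "i = i'"
      proof (rule ccontr)
        assume "i \<noteq> i'"
        then consider "i < i'" | "i' < i" by linarith
        thus False
        proof cases
          case 1 thus False using rlmono[of i i'] a unfolding V_def d_def by auto
        next
          case 2 thus False using rlmono[of i' i] a unfolding V_def d_def by auto
        qed
      qed
    qed
    have Qsub: "(\<lambda>e. c - e) ` eta \<subseteq> {1..<c}"
    proof
      fix x assume "x \<in> (\<lambda>e. c - e) ` eta"
      then obtain e where e: "e \<in> eta" "x = c - e" by auto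
      have "e \<le> k" using member_le_sum[of e eta "\<lambda>x. x"] e fin sE by simp
      thus "x \<in> {1..<c}" using e epos[OF e(1)] k4 unfolding c_def by auto
    qed
    have inj2: "inj_on (\<lambda>e. c - e) eta"
    proof (rule inj_onI)
      fix a b assume "a \<in> eta" "b \<in> eta" "c - a = c - b"
      moreover have "a \<le> k" "b \<le> k" using member_le_sum[of _ eta "\<lambda>x. x"] calculation fin sE by fastforce+
      ultimately show "a = b" using k4 unfolding c_def by linarith
    qed
    have "card ({1..<c} - (\<lambda>e. c - e) ` eta) = c - 1 - l"
      using card_Diff_subset[OF _ Qsub] card_image[OF inj2] fin unfolding l_def by simp
    moreover have "card (V ` {d<..c}) = c - d" using card_image[OF inj] by simp
    ultimately show "card (V ` {d<..c}) = card ({1..<c} - (\<lambda>e. c - e) ` eta)" unfolding d_def by simp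
  qed
  have "{1..c} = {1..d} \<union> {d<..c}" using dc by auto
  hence "first_column_hooks Y = V ` {1..d} \<union> V ` {d<..c}" using fch by auto
  hence "first_column_hooks Y = lam0 c eta" unfolding part1 part2 lam0_def by auto
  thus ?thesis unfolding c_def .
qed


theorem theorem3p26:
  fixes k n :: nat and eta :: "nat set" and Y :: "(nat \<times> nat) set"
  assumes k4: "k \<ge> 4"
    and n_def: "n = 2 * k - 1"
    and eta_D: "eta \<in> distinct_partitions k"
    and eta_ne: "eta \<noteq> {3, k - 3}"
    and Y_young: "young_diagram Y"
    and diag: "\<forall>i\<ge>1. (i,i) \<in> Y \<longleftrightarrow> i \<le> card eta + 1"
    and h11: "hook Y 1 1 = 2 * n - 4"
    and hii: "\<forall>i. 2 \<le> i \<and> i \<le> card eta + 1 \<longrightarrow>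
               hook Y i i = 2 * (sorted_list_of_set eta ! (card eta - (i - 2) - 1))"
    and armleg: "\<forall>i. 1 \<le> i \<and> i \<le> card eta + 1 \<longrightarrow> arm Y i i = leg Y i i + 1"
  shows "\<not> refinable (first_column_hooks Y) \<and>
         first_column_hooks Y \<in> maximal_unrefinable_bar (tri n)"
proof -
  define c where "c = 2 * k - 3"
  have F: "first_column_hooks Y = lam0 c eta"
    unfolding c_def by (rule fch_eq[OF k4 n_def eta_D Y_young diag h11 hii armleg])
  note P = lam0_props[OF eta_D k4 eta_ne c_def]
  have n2k: "2 * k - 1 = n" using n_def by simp
  have n7: "n \<ge> 7" using n_def k4 by simp
  have c2n: "2 * c = 2 * n - 4" using n_def k4 unfolding c_def by simp
  define U where "U = unrefinable_partitions (tri n)"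
  have LU: "lam0 c eta \<in> U" using P(1,2) n2k unfolding U_def unrefinable_partitions_def by simp
  have finU: "finite U"
  proof (rule finite_subset)
    show "U \<subseteq> Pow {0..tri n}"
    proof
      fix lam assume "lam \<in> U"
      hence f: "finite lam" and s: "\<Sum>lam = tri n"
        unfolding U_def unrefinable_partitions_def distinct_partitions_def by auto
      have "\<And>x. x \<in> lam \<Longrightarrow> x \<le> tri n" using member_le_sum[of _ lam "\<lambda>x. x"] f s by fastforce
      thus "lam \<in> Pow {0..tri n}" by auto
    qed
  qed simp
  have MM: "Max (Max ` U) = 2 * c"
  proof (rule Max_eqI)
    show "finite (Max ` U)" using finU by simp
    show "\<And>y. y \<in> Max ` U \<Longrightarrow> y \<le> 2 * c" using bound_C n7 c2n unfolding U_def by auto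
    show "2 * c \<in> Max ` U" using LU P(3) by (metis image_eqI)
  qed
  have "lam0 c eta \<in> maximal_unrefinable_bar (tri n)"
    unfolding maximal_unrefinable_bar_def maximal_unrefinable_def
    using LU MM P(3) P(4) unfolding U_def by simp
  thus ?thesis using F P(1) by simp
qed

end
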